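(* Let $\Omega\subset\mathbb H^n$ be an open set and let $u:\Omega\to\mathbb R$ be continuous with $\partial_Hu(\xi)\neq\emptyset$ for every $\xi\in\Omega$. Then the set-valued map $\partial_Hu:\Omega\to 2^{\mathbb R^{2n}}$ is upper semicontinuous on $\Omega$. Moreover, for every compact set $K\subset\Omega$, the set $\partial_Hu(K)$ is compact.
   Context: $\mathbb H^n=\mathbb C^n\times\mathbb R\cong\mathbb R^{2n+1}$ with real coordinates $(x,y,t)$, $z=x+iy$, group law $(z,t)\circ(z',t')=(z+z',t+t'+2\,\mathrm{Im}\langle z,z'\rangle)$, $\langle z,z'\rangle=\sum_j z_j\overline{z'_j}$. Horizontal plane at $\xi_0=(x_0,y_0,t_0)$: $H_{\xi_0}=\{(x,y,t):t=t_0+2(x\cdot y_0-x_0\cdot y)\}$. $\mathrm{Pr}_1(x,y,t)=(x,y)$. For $\xi_0\in\Omega$, $\partial_Hu(\xi_0)=\{p\in\mathbb R^{2n}:u(\xi)\ge u(\xi_0)+p\cdot(\mathrm{Pr}_1(\xi)-\mathrm{Pr}_1(\xi_0))\ \forall\xi\in\Omega\cap H_{\xi_0}\}$ (a compact convex set), and $\partial_Hu(K)=\bigcup_{\xi\in K}\partial_Hu(\xi)$. A set-valued map $F$ with nonempty compact values is upper semicontinuous at $x$ if for every $\varepsilon>0$ there is $\delta>0$ such that $F(x')$ is contained in the $\varepsilon$-neighbourhood of $F(x)$ whenever $x'$ is within distance $\delta$ of $x$. *)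

theory Defs
  imports "HOL-Analysis.Analysis"
begin

text \<open>Points of the Heisenberg group H^n = C^n x R, with real coordinates (x,y,t),
  x,y in R^n (index type 'n), t in R.  R^{2n} is rendered as real^'n x real^'n,
  whose inner product is p . q = p1 . q1 + p2 . q2.\<close>

type_synonym 'n heis = "(real^'n) \<times> (real^'n) \<times> real"

definition Pr1 :: "'n::finite heis \<Rightarrow> (real^'n) \<times> (real^'n)" where
  "Pr1 \<xi> = (fst \<xi>, fst (snd \<xi>))"

definition horiz_plane :: "'n::finite heis \<Rightarrow> 'n heis set" where
  "horiz_plane \<xi>0 = {(x, y, t). t = snd (snd \<xi>0)
      + 2 * (x \<bullet> fst (snd \<xi>0) - fst \<xi>0 \<bullet> y)}"

definition H_subdiff ::
  "'n::finite heis set \<Rightarrow> ('n heis \<Rightarrow> real) \<Rightarrow> 'n heis \<Rightarrow> ((real^'n) \<times> (real^'n)) set" where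
  "H_subdiff \<Omega> u \<xi>0 = {p. \<forall>\<xi> \<in> \<Omega> \<inter> horiz_plane \<xi>0.
      u \<xi> \<ge> u \<xi>0 + p \<bullet> (Pr1 \<xi> - Pr1 \<xi>0)}"

definition eps_nbhd :: "real \<Rightarrow> 'a::metric_space set \<Rightarrow> 'a set" where
  "eps_nbhd \<epsilon> A = {q. \<exists>p\<in>A. dist q p < \<epsilon>}"

definition usc_on :: "'a::metric_space set \<Rightarrow> ('a \<Rightarrow> 'b::metric_space set) \<Rightarrow> bool" where
  "usc_on S F \<longleftrightarrow> (\<forall>x\<in>S. \<forall>\<epsilon>>0. \<exists>\<delta>>0. \<forall>x'\<in>S. dist x' x < \<delta> \<longrightarrow> F x' \<subseteq> eps_nbhd \<epsilon> (F x))"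

end

theory Submission
  imports Defs
begin

lemma graph_closed:
  fixes \<Omega> :: "'n::finite heis set" and u :: "'n heis \<Rightarrow> real"
  assumes "open \<Omega>" "continuous_on \<Omega> u" "\<xi> \<in> \<Omega>" "\<forall>k. X k \<in> \<Omega>" "X \<longlonglongrightarrow> \<xi>"
    "\<forall>k. P k \<in> H_subdiff \<Omega> u (X k)" "P \<longlonglongrightarrow> p"
  shows "p \<in> H_subdiff \<Omega> u \<xi>"
  unfolding H_subdiff_def
proof (intro CollectI ballI)
  fix \<eta> assume eta: "\<eta> \<in> \<Omega> \<inter> horiz_plane \<xi>"
  obtain a b c where ed: "\<eta> = (a,b,c)" by (cases \<eta>) auto
  define E where "E k = (a, b, snd (snd (X k)) + 2*(a \<bullet> fst (snd (X k)) - fst (X k) \<bullet> b))" for k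
  have "(\<lambda>k. snd (snd (X k)) + 2*(a \<bullet> fst (snd (X k)) - fst (X k) \<bullet> b))
      \<longlonglongrightarrow> snd (snd \<xi>) + 2*(a \<bullet> fst (snd \<xi>) - fst \<xi> \<bullet> b)"
    by (intro tendsto_intros assms)
  moreover have "c = snd (snd \<xi>) + 2*(a \<bullet> fst (snd \<xi>) - fst \<xi> \<bullet> b)"
    using eta ed by (cases \<xi>) (auto simp: horiz_plane_def inner_commute)
  ultimately have Elim: "E \<longlonglongrightarrow> \<eta>" unfolding E_def ed
    by (intro tendsto_intros) auto
  have evE: "eventually (\<lambda>k. E k \<in> \<Omega>) sequentially"
    using topological_tendstoD[OF Elim assms(1)] eta by auto
  have Eh: "E k \<in> horiz_plane (X k)" for k
    by (cases "X k") (simp add: E_def horiz_plane_def inner_commute)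
  have ev: "eventually (\<lambda>k. u (X k) + P k \<bullet> (Pr1 (E k) - Pr1 (X k)) \<le> u (E k)) sequentially"
    using evE by eventually_elim (use assms(6) Eh in \<open>auto simp: H_subdiff_def\<close>)
  have l1: "(\<lambda>k. u (E k)) \<longlonglongrightarrow> u \<eta>"
    using continuous_on_tendsto_compose[OF assms(2) Elim _ evE] eta by (auto simp: o_def)
  have l2: "(\<lambda>k. u (X k)) \<longlonglongrightarrow> u \<xi>"
    using continuous_on_tendsto_compose[OF assms(2) assms(5) assms(3)] assms(4) by (auto simp: o_def)
  have l3: "(\<lambda>k. Pr1 (E k) - Pr1 (X k)) \<longlonglongrightarrow> Pr1 \<eta> - Pr1 \<xi>"
    unfolding Pr1_def using Elim assms(5) by (intro tendsto_intros)
  have "(\<lambda>k. u (X k) + P k \<bullet> (Pr1 (E k) - Pr1 (X k))) \<longlonglongrightarrow> u \<xi> + p \<bullet> (Pr1 \<eta> - Pr1 \<xi>)"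
    by (intro tendsto_intros l2 l3 assms(7))
  from tendsto_le[OF trivial_limit_sequentially l1 this ev]
  show "u \<xi> + p \<bullet> (Pr1 \<eta> - Pr1 \<xi>) \<le> u \<eta>" .
qed

lemma loc_bdd:
  fixes \<Omega> :: "'n::finite heis set" and u :: "'n heis \<Rightarrow> real"
  assumes "open \<Omega>" "continuous_on \<Omega> u" "\<xi>0 \<in> \<Omega>"
  shows "\<exists>\<delta>>0. \<exists>B. \<forall>\<xi>\<in>\<Omega>. dist \<xi> \<xi>0 < \<delta> \<longrightarrow> (\<forall>p\<in>H_subdiff \<Omega> u \<xi>. norm p \<le> B)"
proof -
  obtain r where r: "r > 0" "cball \<xi>0 r \<subseteq> \<Omega>"
    using open_contains_cball assms(1,3) by blast
  have "compact (u ` cball \<xi>0 r)"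
    by (intro compact_continuous_image continuous_on_subset[OF assms(2) r(2)]) simp
  then obtain M where M: "\<And>z. z \<in> cball \<xi>0 r \<Longrightarrow> \<bar>u z\<bar> \<le> M"
    using compact_imp_bounded bounded_real by (metis image_eqI)
  have M0: "M \<ge> 0" using M[of \<xi>0] r(1) by auto
  define C where "C = 2 + 4*(norm \<xi>0 + r)"
  have C0: "C > 0" using r(1) unfolding C_def by (intro add_pos_nonneg) auto
  define s where "s = r / (2*C)"
  have s0: "s > 0" using r(1) C0 by (simp add: s_def)
  have sC: "s * C = r/2" using C0 by (simp add: s_def)
  show ?thesis
  proof (rule exI[of _ "r/2"], intro conjI exI[of _ "2*M/s"] ballI impI)
    show "r/2 > 0" using r by simp
    fix \<xi> p assume xi: "\<xi> \<in> \<Omega>" "dist \<xi> \<xi>0 < r/2" and p: "p \<in> H_subdiff \<Omega> u \<xi>"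
    show "norm p \<le> 2*M/s"
    proof (cases "p = 0")
      case True then show ?thesis using M0 s0 by simp
    next
      case False
      define e where "e = p /\<^sub>R norm p"
      have ne: "norm e = 1" using False by (simp add: e_def)
      obtain ea eb where eab: "e = (ea, eb)" by (cases e) auto
      obtain x y t where xd: "\<xi> = (x,y,t)" by (cases \<xi>) auto
      define \<eta> where "\<eta> = (x + s *\<^sub>R ea, y + s *\<^sub>R eb, t + 2 * s * ((ea \<bullet> y) - (x \<bullet> eb)))"
      have eh: "\<eta> \<in> horiz_plane \<xi>"
        by (simp add: \<eta>_def xd horiz_plane_def inner_add_left inner_add_right inner_commute algebra_simps)
      have nea: "norm ea \<le> 1" using norm_fst_le[of ea eb] ne eab by simp
      have neb: "norm eb \<le> 1" using norm_snd_le[of eb ea] ne eab by simp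
      have nx: "norm x \<le> norm \<xi>" using norm_fst_le[of x "(y,t)"] xd by simp
      have ny: "norm y \<le> norm \<xi>" using norm_fst_le[of y t] norm_snd_le[of "(y,t)" x] xd by simp
      have nxi: "norm \<xi> \<le> norm \<xi>0 + r"
        using xi(2) r(1) norm_triangle_ineq2[of \<xi> \<xi>0] unfolding dist_norm by linarith
      have "\<bar>ea \<bullet> y - x \<bullet> eb\<bar> \<le> norm ea * norm y + norm x * norm eb"
        using Cauchy_Schwarz_ineq2[of ea y] Cauchy_Schwarz_ineq2[of x eb] by linarith
      also have "\<dots> \<le> norm y + norm x"
        using nea neb by (intro add_mono) (auto intro: mult_left_le_one_le mult_right_le_one_le)
      finally have ib: "\<bar>ea \<bullet> y - x \<bullet> eb\<bar> \<le> 2*(norm \<xi>0 + r)" using nx ny nxi unfolding distrib_left by linarith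
      have "\<eta> - \<xi> = (s *\<^sub>R ea, s *\<^sub>R eb, 2 * s * ((ea \<bullet> y) - (x \<bullet> eb)))"
        by (simp add: \<eta>_def xd)
      hence "norm (\<eta> - \<xi>) \<le> norm (s *\<^sub>R ea) + norm (s *\<^sub>R eb, 2 * s * ((ea \<bullet> y) - (x \<bullet> eb)))"
        using norm_Pair_le[of "s *\<^sub>R ea" "(s *\<^sub>R eb, 2 * s * ((ea \<bullet> y) - (x \<bullet> eb)))"] by simp
      also have "\<dots> \<le> norm (s *\<^sub>R ea) + (norm (s *\<^sub>R eb) + norm (2 * s * ((ea \<bullet> y) - (x \<bullet> eb))))"
        by (intro add_left_mono norm_Pair_le)
      also have "\<dots> = s * norm ea + (s * norm eb + 2 * s * \<bar>ea \<bullet> y - x \<bullet> eb\<bar>)"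
        using s0 by (simp add: abs_mult)
      also have "\<dots> \<le> s * 1 + (s * 1 + 2 * s * (2*(norm \<xi>0 + r)))"
        using s0 nea neb ib by (intro add_mono mult_left_mono) auto
      also have "\<dots> = s * C" by (simp add: C_def algebra_simps)
      finally have "dist \<eta> \<xi> \<le> r/2" using sC by (simp add: dist_norm)
      hence "dist \<eta> \<xi>0 \<le> r" using xi(2) dist_triangle[of \<eta> \<xi>0 \<xi>] by linarith
      hence ec: "\<eta> \<in> cball \<xi>0 r" by (simp add: dist_commute)
      have xc: "\<xi> \<in> cball \<xi>0 r" using xi(2) r(1) dist_commute[of \<xi> \<xi>0] by simp
      have h1: "u \<xi> + p \<bullet> (Pr1 \<eta> - Pr1 \<xi>) \<le> u \<eta>"
        using p ec r(2) eh unfolding H_subdiff_def by auto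
      have h2: "Pr1 \<eta> - Pr1 \<xi> = s *\<^sub>R e" by (simp add: Pr1_def \<eta>_def xd eab)
      have h3: "p \<bullet> (s *\<^sub>R e) = s * norm p"
        using False by (simp add: e_def inner_commute power2_eq_square flip: power2_norm_eq_inner)
      have "u \<xi> + s * norm p \<le> u \<eta>" using h1 unfolding h2 h3 .
      hence "s * norm p \<le> 2*M" using M[OF ec] M[OF xc] abs_le_iff by linarith
      thus ?thesis using s0 by (simp add: field_simps mult.commute)
    qed
  qed
qed


lemma usc_part:
  fixes \<Omega> :: "'n::finite heis set" and u :: "'n heis \<Rightarrow> real"
  assumes "open \<Omega>" "continuous_on \<Omega> u"
  shows "usc_on \<Omega> (H_subdiff \<Omega> u)"
  unfolding usc_on_def
proof (intro ballI allI impI)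
  fix \<xi> :: "'n heis" and \<epsilon> :: real
  assume xi: "\<xi> \<in> \<Omega>" and e: "\<epsilon> > 0"
  obtain \<delta>0 B where d0: "\<delta>0 > 0" and B: "\<And>x p. x \<in> \<Omega> \<Longrightarrow> dist x \<xi> < \<delta>0 \<Longrightarrow> p \<in> H_subdiff \<Omega> u x \<Longrightarrow> norm p \<le> B"
    using loc_bdd[OF assms xi] by blast
  show "\<exists>\<delta>>0. \<forall>x'\<in>\<Omega>. dist x' \<xi> < \<delta> \<longrightarrow> H_subdiff \<Omega> u x' \<subseteq> eps_nbhd \<epsilon> (H_subdiff \<Omega> u \<xi>)"
  proof (rule ccontr)
    assume na: "\<not> ?thesis"
    have "\<forall>k. \<exists>x q. x \<in> \<Omega> \<and> dist x \<xi> < min \<delta>0 (1 / Suc k) \<and> q \<in> H_subdiff \<Omega> u x \<and> q \<notin> eps_nbhd \<epsilon> (H_subdiff \<Omega> u \<xi>)"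
    proof
      fix k :: nat
      have "min \<delta>0 (1 / Suc k) > 0" using d0 by simp
      then show "\<exists>x q. x \<in> \<Omega> \<and> dist x \<xi> < min \<delta>0 (1 / Suc k) \<and> q \<in> H_subdiff \<Omega> u x \<and> q \<notin> eps_nbhd \<epsilon> (H_subdiff \<Omega> u \<xi>)"
        using na by blast
    qed
    then obtain X Q where XQ: "\<And>k. X k \<in> \<Omega>" "\<And>k. dist (X k) \<xi> < min \<delta>0 (1 / Suc k)"
      "\<And>k. Q k \<in> H_subdiff \<Omega> u (X k)" "\<And>k. Q k \<notin> eps_nbhd \<epsilon> (H_subdiff \<Omega> u \<xi>)"
      by metis
    have Xlim: "X \<longlonglongrightarrow> \<xi>"
    proof (rule metric_LIMSEQ_I)
      fix r :: real assume "r > 0"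
      then obtain N :: nat where N: "inverse (Suc N) < r" using reals_Archimedean by blast
      show "\<exists>no. \<forall>n\<ge>no. dist (X n) \<xi> < r"
      proof (intro exI allI impI)
        fix n assume "n \<ge> N"
        hence "1 / real (Suc n) \<le> 1 / Suc N" by (simp add: frac_le)
        thus "dist (X n) \<xi> < r" using XQ(2)[of n] N by (simp add: inverse_eq_divide)
      qed
    qed
    have "bounded (range Q)" unfolding bounded_iff
      using B XQ(1,2,3) by (metis min_less_iff_conj rangeE)
    then obtain l r where r: "strict_mono r" "(Q \<circ> r) \<longlonglongrightarrow> l"
      using bounded_imp_convergent_subsequence by blast
    have "l \<in> H_subdiff \<Omega> u \<xi>"
      by (rule graph_closed[OF assms xi _ LIMSEQ_subseq_LIMSEQ[OF Xlim r(1)] _ r(2)])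
        (use XQ in auto)
    moreover obtain N where "\<forall>n\<ge>N. dist ((Q \<circ> r) n) l < \<epsilon>"
      using metric_LIMSEQ_D[OF r(2) e] by blast
    ultimately have "Q (r N) \<in> eps_nbhd \<epsilon> (H_subdiff \<Omega> u \<xi>)"
      unfolding eps_nbhd_def by auto
    thus False using XQ(4) by blast
  qed
qed

lemma compact_part:
  fixes \<Omega> :: "'n::finite heis set" and u :: "'n heis \<Rightarrow> real"
  assumes "open \<Omega>" "continuous_on \<Omega> u" "compact K" "K \<subseteq> \<Omega>"
  shows "compact (\<Union>\<xi>\<in>K. H_subdiff \<Omega> u \<xi>)"
proof -
  let ?S = "\<Union>\<xi>\<in>K. H_subdiff \<Omega> u \<xi>"
  have sK: "seq_compact K" using assms(3) compact_imp_seq_compact by blast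
  have "closed ?S" unfolding closed_sequential_limits
  proof (intro allI impI, elim conjE)
    fix P l assume P: "\<forall>n. P n \<in> ?S" and Pl: "P \<longlonglongrightarrow> l"
    have "\<forall>n. \<exists>x. x \<in> K \<and> P n \<in> H_subdiff \<Omega> u x" using P by blast
    then obtain X where X: "\<And>n. X n \<in> K" "\<And>n. P n \<in> H_subdiff \<Omega> u (X n)"
      by metis
    obtain z r where z: "z \<in> K" "strict_mono r" "(X \<circ> r) \<longlonglongrightarrow> z"
      using seq_compactE[OF sK, of X] X(1) by blast
    have "l \<in> H_subdiff \<Omega> u z"
      by (rule graph_closed[OF assms(1,2) _ _ z(3) _ LIMSEQ_subseq_LIMSEQ[OF Pl z(2)]])
        (use X z assms(4) in auto)
    thus "l \<in> ?S" using z(1) by blast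
  qed
  moreover have "bounded ?S"
  proof (rule ccontr)
    assume "\<not> bounded ?S"
    hence "\<forall>n::nat. \<exists>p\<in>?S. norm p > real n" unfolding bounded_iff by (meson not_le)
    hence "\<forall>n::nat. \<exists>x p. x \<in> K \<and> p \<in> H_subdiff \<Omega> u x \<and> norm p > real n" by blast
    then obtain X P where PX: "\<And>n. X n \<in> K" "\<And>n. P n \<in> H_subdiff \<Omega> u (X n)" "\<And>n. norm (P n) > real n"
      by metis
    obtain z r where z: "z \<in> K" "strict_mono r" "(X \<circ> r) \<longlonglongrightarrow> z"
      using seq_compactE[OF sK, of X] PX(1) by blast
    obtain \<delta> B where d: "\<delta> > 0" and B: "\<And>x p. x \<in> \<Omega> \<Longrightarrow> dist x z < \<delta> \<Longrightarrow> p \<in> H_subdiff \<Omega> u x \<Longrightarrow> norm p \<le> B"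
      using loc_bdd[OF assms(1,2)] z(1) assms(4) by blast
    obtain N where N: "\<forall>n\<ge>N. dist ((X \<circ> r) n) z < \<delta>"
      using metric_LIMSEQ_D[OF z(3) d] by blast
    define n where "n = max N (nat \<lceil>B\<rceil>)"
    have "norm (P (r n)) \<le> B"
      using B[of "X (r n)" "P (r n)"] N PX(1,2)[of "r n"] assms(4) by (auto simp: n_def)
    moreover have "real n \<le> real (r n)" using seq_suble[OF z(2), of n] by simp
    moreover have "B \<le> real n" unfolding n_def by linarith
    ultimately show False using PX(3)[of "r n"] by linarith
  qed
  ultimately show ?thesis using compact_eq_bounded_closed by blast
qed

theorem proposition2p2:
  fixes \<Omega> :: "'n::finite heis set" and u :: "'n heis \<Rightarrow> real"
  assumes "open \<Omega>" and "continuous_on \<Omega> u"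
    and "\<forall>\<xi>\<in>\<Omega>. H_subdiff \<Omega> u \<xi> \<noteq> {}"
  shows "usc_on \<Omega> (H_subdiff \<Omega> u)
    \<and> (\<forall>K. compact K \<and> K \<subseteq> \<Omega> \<longrightarrow> compact (\<Union>\<xi>\<in>K. H_subdiff \<Omega> u \<xi>))"
  using usc_part[OF assms(1,2)] compact_part[OF assms(1,2)] by blast

end
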